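(* For a meet-semilattice $A$, the following are equivalent: (1) $A$ is proHeyting. (2) $\mathcal{BL}(\mathcal{DM} A) = \mathcal{DM} A$. (3) $\mathrm{p}\mathcal{H}(\mathcal{DM} A) = \mathcal{DM} A$.
   Context: Let $A$ be a meet-semilattice. $\mathcal{DM} A$ is the Dedekind-MacNeille completion of $A$ (the complete lattice of normal ideals $N=N^{u\ell}$ of $A$). A join $\bigvee S$ existing in $A$ is distributive if $a\wedge\bigvee S=\bigvee\{a\wedge s: s\in S\}$ for all $a\in A$; a D-ideal is a downset closed under all distributive joins of its subsets; $\mathcal{BL} A$ (the Bruns-Lakser completion) is the frame of D-ideals of $A$. A relative annihilator of $A$ is a downset $\langle a,b\rangle=\{x\in A: a\wedge x\le b\}$; $\mathcal{R} A$ is the poset of relative annihilators. $A$ is proHeyting if every relative annihilator is a normal ideal. The proHeyting extension $\mathrm{p}\mathcal{H} B$ of a meet-semilattice $B$ is the bounded sublattice of $\mathcal{BL} B$ generated by the relative annihilators of $B$. $A$ is identified with its principal downsets, so $A\le\mathcal{DM} A\le\mathcal{BL} A$; for $A\le B\le\mathcal{BL} A$ one has $\mathcal{BL} B\cong\mathcal{BL} A$, and these are identified (so in particular $\mathcal{BL}(\mathcal{DM} A)=\mathcal{BL} A$), and $\mathcal{R} A$ is identified with its image in $\mathcal{R} B$ via $\langle a,b\rangle_A\mapsto\langle a,b\rangle_B$. *)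

theory Defs
  imports Main
begin

text \<open>A meet-semilattice A is the carrier UNIV of a type of class semilattice_inf with (\<le>) and inf;
  its Dedekind-MacNeille completion DM A is the carrier of normal ideals with (\<subseteq>) and (\<inter>).\<close>

definition ubs :: "'b set \<Rightarrow> ('b \<Rightarrow> 'b \<Rightarrow> bool) \<Rightarrow> 'b set \<Rightarrow> 'b set" where
  "ubs P le S = {x \<in> P. \<forall>s\<in>S. le s x}"

definition lbs :: "'b set \<Rightarrow> ('b \<Rightarrow> 'b \<Rightarrow> bool) \<Rightarrow> 'b set \<Rightarrow> 'b set" where
  "lbs P le S = {x \<in> P. \<forall>s\<in>S. le x s}"

definition is_join :: "'b set \<Rightarrow> ('b \<Rightarrow> 'b \<Rightarrow> bool) \<Rightarrow> 'b set \<Rightarrow> 'b \<Rightarrow> bool" where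
  "is_join P le S j \<longleftrightarrow> j \<in> ubs P le S \<and> (\<forall>u\<in>ubs P le S. le j u)"

definition distributive_join ::
  "'b set \<Rightarrow> ('b \<Rightarrow> 'b \<Rightarrow> bool) \<Rightarrow> ('b \<Rightarrow> 'b \<Rightarrow> 'b) \<Rightarrow> 'b set \<Rightarrow> 'b \<Rightarrow> bool" where
  "distributive_join P le mt S j \<longleftrightarrow>
     is_join P le S j \<and> (\<forall>a\<in>P. is_join P le ((\<lambda>s. mt a s) ` S) (mt a j))"

definition is_downset :: "'b set \<Rightarrow> ('b \<Rightarrow> 'b \<Rightarrow> bool) \<Rightarrow> 'b set \<Rightarrow> bool" where
  "is_downset P le I \<longleftrightarrow> I \<subseteq> P \<and> (\<forall>x\<in>I. \<forall>y\<in>P. le y x \<longrightarrow> y \<in> I)"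

definition D_ideal :: "'b set \<Rightarrow> ('b \<Rightarrow> 'b \<Rightarrow> bool) \<Rightarrow> ('b \<Rightarrow> 'b \<Rightarrow> 'b) \<Rightarrow> 'b set \<Rightarrow> bool" where
  "D_ideal P le mt I \<longleftrightarrow> is_downset P le I \<and>
     (\<forall>S j. S \<subseteq> I \<longrightarrow> distributive_join P le mt S j \<longrightarrow> j \<in> I)"

definition BL :: "'b set \<Rightarrow> ('b \<Rightarrow> 'b \<Rightarrow> bool) \<Rightarrow> ('b \<Rightarrow> 'b \<Rightarrow> 'b) \<Rightarrow> 'b set set" where
  "BL P le mt = {I. D_ideal P le mt I}"

definition principal_downset :: "'b set \<Rightarrow> ('b \<Rightarrow> 'b \<Rightarrow> bool) \<Rightarrow> 'b \<Rightarrow> 'b set" where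
  "principal_downset P le a = {x \<in> P. le x a}"

definition DM :: "'b set \<Rightarrow> ('b \<Rightarrow> 'b \<Rightarrow> bool) \<Rightarrow> 'b set set" where
  "DM P le = {N. N \<subseteq> P \<and> N = lbs P le (ubs P le N)}"

definition rel_ann :: "'b set \<Rightarrow> ('b \<Rightarrow> 'b \<Rightarrow> bool) \<Rightarrow> ('b \<Rightarrow> 'b \<Rightarrow> 'b) \<Rightarrow> 'b \<Rightarrow> 'b \<Rightarrow> 'b set" where
  "rel_ann P le mt a b = {x \<in> P. le (mt a x) b}"

definition proHeyting :: "'b set \<Rightarrow> ('b \<Rightarrow> 'b \<Rightarrow> bool) \<Rightarrow> ('b \<Rightarrow> 'b \<Rightarrow> 'b) \<Rightarrow> bool" where
  "proHeyting P le mt \<longleftrightarrow> (\<forall>a\<in>P. \<forall>b\<in>P. rel_ann P le mt a b \<in> DM P le)"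

text \<open>Meets in BL are intersections, joins are the D-ideals generated by unions,
  bottom is the least D-ideal, top is P.\<close>
inductive_set pH :: "'b set \<Rightarrow> ('b \<Rightarrow> 'b \<Rightarrow> bool) \<Rightarrow> ('b \<Rightarrow> 'b \<Rightarrow> 'b) \<Rightarrow> 'b set set"
  for P le mt where
  ann: "a \<in> P \<Longrightarrow> b \<in> P \<Longrightarrow> rel_ann P le mt a b \<in> pH P le mt"
| bot: "\<Inter>(BL P le mt) \<in> pH P le mt"
| top: "P \<in> pH P le mt"
| meet: "I \<in> pH P le mt \<Longrightarrow> J \<in> pH P le mt \<Longrightarrow> I \<inter> J \<in> pH P le mt"
| join: "I \<in> pH P le mt \<Longrightarrow> J \<in> pH P le mt \<Longrightarrow>
           \<Inter>{K \<in> BL P le mt. I \<union> J \<subseteq> K} \<in> pH P le mt"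

end

theory Submission
  imports Defs
begin

lemma P_in_BL: "P \<in> BL P le mt"
  unfolding BL_def D_ideal_def is_downset_def distributive_join_def is_join_def ubs_def by auto

lemma Inter_BL: assumes "F \<subseteq> BL P le mt" "F \<noteq> {}" shows "\<Inter>F \<in> BL P le mt"
  unfolding BL_def D_ideal_def is_downset_def
proof (intro CollectI conjI allI impI ballI)
  have "\<And>I. I \<in> F \<Longrightarrow> I \<subseteq> P" using assms(1) unfolding BL_def D_ideal_def is_downset_def by blast
  then show "\<Inter>F \<subseteq> P" using assms(2) by blast
next
  fix x y assume x: "x \<in> \<Inter>F" and y: "y \<in> P" "le y x"
  show "y \<in> \<Inter>F"
  proof
    fix I assume "I \<in> F"
    then have "D_ideal P le mt I" "x \<in> I" using assms(1) x unfolding BL_def by auto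
    then show "y \<in> I" using y unfolding D_ideal_def is_downset_def by blast
  qed
next
  fix S j assume S: "S \<subseteq> \<Inter>F" and dj: "distributive_join P le mt S j"
  show "j \<in> \<Inter>F"
  proof
    fix I assume "I \<in> F"
    then have "D_ideal P le mt I" "S \<subseteq> I" using assms(1) S unfolding BL_def by auto
    then show "j \<in> I" using dj unfolding D_ideal_def by blast
  qed
qed

lemma rel_ann_BL:
  fixes P :: "'c set set"
  assumes "a \<in> P" "b \<in> P"
  shows "rel_ann P (\<subseteq>) (\<inter>) a b \<in> BL P (\<subseteq>) (\<inter>)"
  unfolding BL_def D_ideal_def is_downset_def
proof (intro CollectI conjI allI impI ballI)
  show "rel_ann P (\<subseteq>) (\<inter>) a b \<subseteq> P" unfolding rel_ann_def by auto
next
  fix x y assume "x \<in> rel_ann P (\<subseteq>) (\<inter>) a b" "y \<in> P" "y \<subseteq> x"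
  then show "y \<in> rel_ann P (\<subseteq>) (\<inter>) a b" unfolding rel_ann_def by auto
next
  fix S j assume S: "S \<subseteq> rel_ann P (\<subseteq>) (\<inter>) a b" and dj: "distributive_join P (\<subseteq>) (\<inter>) S j"
  have jP: "j \<in> P" using dj unfolding distributive_join_def is_join_def ubs_def by auto
  have "is_join P (\<subseteq>) ((\<inter>) a ` S) (a \<inter> j)" using dj assms(1) unfolding distributive_join_def by auto
  moreover have "b \<in> ubs P (\<subseteq>) ((\<inter>) a ` S)" using S assms(2) unfolding ubs_def rel_ann_def by auto
  ultimately have "a \<inter> j \<subseteq> b" unfolding is_join_def by auto
  then show "j \<in> rel_ann P (\<subseteq>) (\<inter>) a b" using jP unfolding rel_ann_def by auto
qed

lemma pH_BL:
  fixes P :: "'c set set"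
  shows "I \<in> pH P (\<subseteq>) (\<inter>) \<Longrightarrow> I \<in> BL P (\<subseteq>) (\<inter>)"
proof (induction rule: pH.induct)
  case (ann a b)
  then show ?case using rel_ann_BL by blast
next
  case bot
  then show ?case using Inter_BL[of "BL P (\<subseteq>) (\<inter>)"] P_in_BL by blast
next
  case top
  then show ?case using P_in_BL by blast
next
  case (meet I J)
  then show ?case using Inter_BL[of "{I,J}"] by auto
next
  case (join I J)
  have "I \<subseteq> P" "J \<subseteq> P" using join unfolding BL_def D_ideal_def is_downset_def by auto
  then have "P \<in> {K \<in> BL P (\<subseteq>) (\<inter>). I \<union> J \<subseteq> K}" using P_in_BL by auto
  then show ?case using Inter_BL[of "{K \<in> BL P (\<subseteq>) (\<inter>). I \<union> J \<subseteq> K}"] by blast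
qed

lemma princ_BL:
  fixes P :: "'c set set"
  assumes "K \<in> P" shows "principal_downset P (\<subseteq>) K \<in> BL P (\<subseteq>) (\<inter>)"
  unfolding BL_def D_ideal_def is_downset_def
proof (intro CollectI conjI allI impI ballI)
  show "principal_downset P (\<subseteq>) K \<subseteq> P" unfolding principal_downset_def by auto
next
  fix x y assume "x \<in> principal_downset P (\<subseteq>) K" "y \<in> P" "y \<subseteq> x"
  then show "y \<in> principal_downset P (\<subseteq>) K" unfolding principal_downset_def by auto
next
  fix S j assume S: "S \<subseteq> principal_downset P (\<subseteq>) K" and dj: "distributive_join P (\<subseteq>) (\<inter>) S j"
  have "K \<in> ubs P (\<subseteq>) S" using S assms unfolding ubs_def principal_downset_def by auto
  moreover have "is_join P (\<subseteq>) S j" using dj unfolding distributive_join_def by auto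
  ultimately show "j \<in> principal_downset P (\<subseteq>) K"
    unfolding is_join_def principal_downset_def ubs_def by auto
qed

abbreviation cl :: "'a::semilattice_inf set \<Rightarrow> 'a set" where
  "cl X \<equiv> lbs UNIV (\<le>) (ubs UNIV (\<le>) X)"

lemma cl_ext: "X \<subseteq> cl X"
  unfolding lbs_def ubs_def by auto

lemma cl_mono: "X \<subseteq> Y \<Longrightarrow> cl X \<subseteq> cl Y"
  unfolding lbs_def ubs_def by auto

lemma DM_iff: "N \<in> DM (UNIV::'a::semilattice_inf set) (\<le>) \<longleftrightarrow> N = cl N"
  unfolding DM_def by auto

lemma DM_eq: "N \<in> DM (UNIV::'a::semilattice_inf set) (\<le>) \<Longrightarrow> cl N = N"
  unfolding DM_def by (drule CollectD, erule conjE, erule sym)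

lemma DM_I: "cl N \<subseteq> N \<Longrightarrow> N \<in> DM (UNIV::'a::semilattice_inf set) (\<le>)"
  unfolding DM_def using cl_ext[of N] by auto

lemma lbs_DM: "lbs UNIV (\<le>) S \<in> DM (UNIV::'a::semilattice_inf set) (\<le>)"
  unfolding DM_def lbs_def ubs_def by (auto intro: order_trans)

lemma cl_DM: "cl X \<in> DM (UNIV::'a::semilattice_inf set) (\<le>)"
  by (rule lbs_DM)

lemma DM_down: "N \<in> DM (UNIV::'a::semilattice_inf set) (\<le>) \<Longrightarrow> x \<in> N \<Longrightarrow> y \<le> x \<Longrightarrow> y \<in> N"
  unfolding DM_def lbs_def ubs_def by (auto intro: order_trans)

lemma Inter_DM: assumes "F \<subseteq> DM (UNIV::'a::semilattice_inf set) (\<le>)"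
  shows "\<Inter>F \<in> DM (UNIV::'a set) (\<le>)"
proof -
  have "cl (\<Inter>F) \<subseteq> N" if "N \<in> F" for N
  proof -
    have "cl (\<Inter>F) \<subseteq> cl N" using that by (intro cl_mono) auto
    also have "\<dots> = N" using that assms by (intro DM_eq) blast
    finally show ?thesis .
  qed
  then have "cl (\<Inter>F) \<subseteq> \<Inter>F" by auto
  then show ?thesis by (rule DM_I)
qed

lemma UNIV_DM: "(UNIV::'a::semilattice_inf set) \<in> DM UNIV (\<le>)"
  using lbs_DM[of "{}"] unfolding lbs_def by simp

lemma down_DM: "{x. x \<le> a} \<in> DM (UNIV::'a::semilattice_inf set) (\<le>)"
  using lbs_DM[of "{a}"] unfolding lbs_def by simp

definition imp :: "'a::semilattice_inf set \<Rightarrow> 'a set \<Rightarrow> 'a set" where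
  "imp a U = {x. \<forall>y\<in>a. inf y x \<in> U}"

lemma imp_DM:
  assumes ph: "proHeyting (UNIV::'a::semilattice_inf set) (\<le>) inf"
    and U: "U \<in> DM (UNIV::'a set) (\<le>)"
  shows "imp a U \<in> DM (UNIV::'a set) (\<le>)"
proof -
  define F where "F = {rel_ann UNIV (\<le>) inf y m | y m. y \<in> a \<and> m \<in> ubs UNIV (\<le>) U}"
  have E: "inf y x \<in> U \<longleftrightarrow> (\<forall>m\<in>ubs UNIV (\<le>) U. inf y x \<le> m)" for y x
  proof -
    have "inf y x \<in> U \<longleftrightarrow> inf y x \<in> cl U" using DM_eq[OF U] by simp
    then show ?thesis unfolding lbs_def by simp
  qed
  have eq: "imp a U = \<Inter>F"
  proof (rule set_eqI)
    fix x
    show "x \<in> imp a U \<longleftrightarrow> x \<in> \<Inter>F"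
    proof
      assume h: "x \<in> imp a U"
      show "x \<in> \<Inter>F"
      proof (rule InterI)
        fix X assume "X \<in> F"
        then obtain y m where X: "X = rel_ann UNIV (\<le>) inf y m" and y: "y \<in> a" and m: "m \<in> ubs UNIV (\<le>) U"
          unfolding F_def by (simp only: mem_Collect_eq) blast
        have "inf y x \<in> U" using h y unfolding imp_def by simp
        then have "inf y x \<le> m" using E m by simp
        then show "x \<in> X" unfolding X rel_ann_def by simp
      qed
    next
      assume h: "x \<in> \<Inter>F"
      have "inf y x \<in> U" if y: "y \<in> a" for y
      proof -
        have "inf y x \<le> m" if m: "m \<in> ubs UNIV (\<le>) U" for m
        proof -
          have "rel_ann UNIV (\<le>) inf y m \<in> F" unfolding F_def using y m by blast
          then have "x \<in> rel_ann UNIV (\<le>) inf y m" using h by (rule InterD[rotated])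
          then show "inf y x \<le> m" unfolding rel_ann_def by simp
        qed
        then show ?thesis using E by simp
      qed
      then show "x \<in> imp a U" unfolding imp_def by simp
    qed
  qed
  have sub: "F \<subseteq> DM UNIV (\<le>)"
  proof (rule subsetI)
    fix X assume "X \<in> F"
    then obtain y m where X: "X = rel_ann UNIV (\<le>) inf y m" unfolding F_def by (simp only: mem_Collect_eq) blast
    have "rel_ann UNIV (\<le>) inf y m \<in> DM UNIV (\<le>)" using ph unfolding proHeyting_def by blast
    then show "X \<in> DM UNIV (\<le>)" unfolding X .
  qed
  show ?thesis unfolding eq by (rule Inter_DM[OF sub])
qed


lemma L3:
  assumes ph: "proHeyting (UNIV::'a::semilattice_inf set) (\<le>) inf"
    and I: "I \<in> BL (DM (UNIV::'a set) (\<le>)) (\<subseteq>) (\<inter>)"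
  shows "I \<in> principal_downset (DM (UNIV::'a set) (\<le>)) (\<subseteq>) ` DM (UNIV::'a set) (\<le>)"
proof -
  let ?D = "DM (UNIV::'a set) (\<le>)"
  define K where "K = cl (\<Union>I)"
  have DI: "D_ideal ?D (\<subseteq>) (\<inter>) I" using I unfolding BL_def by simp
  have ID: "I \<subseteq> ?D" using DI unfolding D_ideal_def is_downset_def by simp
  have Idown: "\<And>x y. x \<in> I \<Longrightarrow> y \<in> ?D \<Longrightarrow> y \<subseteq> x \<Longrightarrow> y \<in> I"
    using DI unfolding D_ideal_def is_downset_def by simp
  have Icl: "\<And>S j. S \<subseteq> I \<Longrightarrow> distributive_join ?D (\<subseteq>) (\<inter>) S j \<Longrightarrow> j \<in> I"
    using DI unfolding D_ideal_def by simp
  have KD: "K \<in> ?D" unfolding K_def by (rule cl_DM)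
  have sK: "s \<subseteq> K" if "s \<in> I" for s using that cl_ext[of "\<Union>I"] unfolding K_def by auto
  have "distributive_join ?D (\<subseteq>) (\<inter>) I K"
    unfolding distributive_join_def
  proof (intro conjI ballI)
    show "is_join ?D (\<subseteq>) I K"
      unfolding is_join_def
    proof (intro conjI ballI)
      show "K \<in> ubs ?D (\<subseteq>) I" using KD sK unfolding ubs_def by auto
    next
      fix U assume "U \<in> ubs ?D (\<subseteq>) I"
      then have UD: "U \<in> ?D" and IU: "\<Union>I \<subseteq> U" unfolding ubs_def by auto
      from IU have "K \<subseteq> cl U" unfolding K_def by (rule cl_mono)
      then show "K \<subseteq> U" using DM_eq[OF UD] by simp
    qed
  next
    fix a assume aD: "a \<in> ?D"
    show "is_join ?D (\<subseteq>) ((\<inter>) a ` I) (a \<inter> K)"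
      unfolding is_join_def
    proof (intro conjI ballI)
      have "a \<inter> K \<in> ?D" using Inter_DM[of "{a,K}"] aD KD by auto
      then show "a \<inter> K \<in> ubs ?D (\<subseteq>) ((\<inter>) a ` I)" using sK unfolding ubs_def by auto
    next
      fix U assume "U \<in> ubs ?D (\<subseteq>) ((\<inter>) a ` I)"
      then have UD: "U \<in> ?D" and aU: "\<And>s. s \<in> I \<Longrightarrow> a \<inter> s \<subseteq> U" unfolding ubs_def by auto
      have "\<Union>I \<subseteq> imp a U"
      proof
        fix x assume "x \<in> \<Union>I"
        then obtain s where s: "s \<in> I" "x \<in> s" by auto
        have sD: "s \<in> ?D" using s ID by auto
        show "x \<in> imp a U" unfolding imp_def
        proof (intro CollectI ballI)
          fix y assume "y \<in> a"
          then have "inf y x \<in> a \<inter> s" using DM_down[OF aD] DM_down[OF sD] s by auto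
          then show "inf y x \<in> U" using aU s by auto
        qed
      qed
      then have "K \<subseteq> cl (imp a U)" unfolding K_def by (rule cl_mono)
      then have "K \<subseteq> imp a U" using DM_eq[OF imp_DM[OF ph UD]] by simp
      then show "a \<inter> K \<subseteq> U" unfolding imp_def by fastforce
    qed
  qed
  then have KI: "K \<in> I" using Icl by blast
  have "I = principal_downset ?D (\<subseteq>) K"
    unfolding principal_downset_def using ID sK Idown[OF KI] by auto
  then show ?thesis using KD by blast
qed

lemma L2:
  assumes H: "\<And>a b. rel_ann (DM (UNIV::'a::semilattice_inf set) (\<le>)) (\<subseteq>) (\<inter>) {x. x \<le> a} {x. x \<le> b}
      \<in> principal_downset (DM (UNIV::'a set) (\<le>)) (\<subseteq>) ` DM (UNIV::'a set) (\<le>)"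
  shows "proHeyting (UNIV::'a set) (\<le>) inf"
  unfolding proHeyting_def
proof (intro ballI)
  fix a b :: 'a
  let ?D = "DM (UNIV::'a set) (\<le>)"
  obtain K where KD: "K \<in> ?D" and K: "rel_ann ?D (\<subseteq>) (\<inter>) {x. x \<le> a} {x. x \<le> b} = principal_downset ?D (\<subseteq>) K"
    using H[of a b] by blast
  have "x \<in> rel_ann UNIV (\<le>) inf a b \<longleftrightarrow> x \<in> K" for x
  proof -
    have "x \<in> rel_ann UNIV (\<le>) inf a b \<longleftrightarrow> {y. y \<le> a} \<inter> {y. y \<le> x} \<subseteq> {y. y \<le> b}"
    proof
      assume "x \<in> rel_ann UNIV (\<le>) inf a b"
      then show "{y. y \<le> a} \<inter> {y. y \<le> x} \<subseteq> {y. y \<le> b}"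
        unfolding rel_ann_def by (auto intro: order_trans le_infI)
    next
      assume h: "{y. y \<le> a} \<inter> {y. y \<le> x} \<subseteq> {y. y \<le> b}"
      have "inf a x \<in> {y. y \<le> a} \<inter> {y. y \<le> x}" by simp
      then show "x \<in> rel_ann UNIV (\<le>) inf a b" using h unfolding rel_ann_def by blast
    qed
    also have "\<dots> \<longleftrightarrow> {y. y \<le> x} \<in> rel_ann ?D (\<subseteq>) (\<inter>) {x. x \<le> a} {x. x \<le> b}"
      unfolding rel_ann_def using down_DM by auto
    also have "\<dots> \<longleftrightarrow> {y. y \<le> x} \<subseteq> K" unfolding K principal_downset_def using down_DM by auto
    also have "\<dots> \<longleftrightarrow> x \<in> K" using DM_down[OF KD] by auto
    finally show ?thesis .
  qed
  then have "rel_ann UNIV (\<le>) inf a b = K" by auto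
  then show "rel_ann UNIV (\<le>) inf a b \<in> ?D" using KD by simp
qed

theorem proposition3p12:
  fixes A :: "'a::semilattice_inf itself"
  shows "(proHeyting (UNIV::'a set) (\<le>) inf
           \<longleftrightarrow> BL (DM (UNIV::'a set) (\<le>)) (\<subseteq>) (\<inter>)
               = principal_downset (DM (UNIV::'a set) (\<le>)) (\<subseteq>) ` DM (UNIV::'a set) (\<le>))
       \<and> (BL (DM (UNIV::'a set) (\<le>)) (\<subseteq>) (\<inter>)
               = principal_downset (DM (UNIV::'a set) (\<le>)) (\<subseteq>) ` DM (UNIV::'a set) (\<le>)
           \<longleftrightarrow> pH (DM (UNIV::'a set) (\<le>)) (\<subseteq>) (\<inter>)
               = principal_downset (DM (UNIV::'a set) (\<le>)) (\<subseteq>) ` DM (UNIV::'a set) (\<le>))"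
proof -
  let ?D = "DM (UNIV::'a set) (\<le>)"
  let ?Pr = "principal_downset ?D (\<subseteq>) ` ?D"
  have PrBL: "?Pr \<subseteq> BL ?D (\<subseteq>) (\<inter>)" using princ_BL by blast
  have PrpH: "?Pr \<subseteq> pH ?D (\<subseteq>) (\<inter>)"
  proof
    fix X assume "X \<in> ?Pr"
    then obtain K where K: "K \<in> ?D" "X = principal_downset ?D (\<subseteq>) K" by blast
    have "X = rel_ann ?D (\<subseteq>) (\<inter>) UNIV K" unfolding K(2) principal_downset_def rel_ann_def by auto
    then show "X \<in> pH ?D (\<subseteq>) (\<inter>)" using pH.ann[OF UNIV_DM K(1)] by simp
  qed
  have pHBL: "pH ?D (\<subseteq>) (\<inter>) \<subseteq> BL ?D (\<subseteq>) (\<inter>)" using pH_BL by blast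
  have e12: "proHeyting (UNIV::'a set) (\<le>) inf \<longleftrightarrow> BL ?D (\<subseteq>) (\<inter>) = ?Pr"
  proof
    assume "proHeyting (UNIV::'a set) (\<le>) inf"
    then show "BL ?D (\<subseteq>) (\<inter>) = ?Pr" using L3 PrBL by blast
  next
    assume h: "BL ?D (\<subseteq>) (\<inter>) = ?Pr"
    show "proHeyting (UNIV::'a set) (\<le>) inf"
    proof (rule L2)
      fix a b :: 'a
      show "rel_ann ?D (\<subseteq>) (\<inter>) {x. x \<le> a} {x. x \<le> b} \<in> ?Pr"
        using rel_ann_BL[OF down_DM[of a] down_DM[of b]] h by simp
    qed
  qed
  have e23: "BL ?D (\<subseteq>) (\<inter>) = ?Pr \<longleftrightarrow> pH ?D (\<subseteq>) (\<inter>) = ?Pr"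
  proof
    assume "BL ?D (\<subseteq>) (\<inter>) = ?Pr"
    then show "pH ?D (\<subseteq>) (\<inter>) = ?Pr" using pHBL PrpH by blast
  next
    assume h: "pH ?D (\<subseteq>) (\<inter>) = ?Pr"
    have "proHeyting (UNIV::'a set) (\<le>) inf"
    proof (rule L2)
      fix a b :: 'a
      show "rel_ann ?D (\<subseteq>) (\<inter>) {x. x \<le> a} {x. x \<le> b} \<in> ?Pr"
        using pH.ann[OF down_DM[of a] down_DM[of b], where le="(\<subseteq>)" and mt="(\<inter>)"] h by simp
    qed
    then show "BL ?D (\<subseteq>) (\<inter>) = ?Pr" using e12 by blast
  qed
  show ?thesis using e12 e23 by blast
qed

end
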